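(* Let $n\ge1$ be an integer with $\phi(n)\ge n/2$, and let $\mathcal{D}_{S_1},\mathcal{D}_{S_2}\subseteq\mathcal{D}_{[n]}\setminus\{n\}$. If $\mathrm{Spec}(\mathrm{ICG}(n,\mathcal{D}_{S_1}))=\mathrm{Spec}(\mathrm{ICG}(n,\mathcal{D}_{S_2}))$, then $1\notin\mathcal{D}_{S_1}\triangle\mathcal{D}_{S_2}$.
   Context: Identify $\mathbb{Z}_n$ with $[n]=\{1,\dots,n\}$. For a divisor $d$ of $n$, $G_n(d)=\{j\in[n]:\gcd(j,n)=d\}$; $\mathcal{D}_{[n]}$ is the set of positive divisors of $n$. For $\mathcal{D}\subseteq\mathcal{D}_{[n]}\setminus\{n\}$, $\mathrm{ICG}(n,\mathcal{D})=\mathrm{Cay}(\mathbb{Z}_n,S)$ with $S=\bigcup_{d\in\mathcal{D}}G_n(d)$, and $\mathcal{D}=\mathcal{D}_S$. $\phi$ is Euler's totient function; $\triangle$ denotes symmetric difference; $\mathrm{Spec}$ is the multiset of adjacency eigenvalues. *)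

theory Defs
  imports "Jordan_Normal_Form.Char_Poly" "HOL-Number_Theory.Totient"
begin

text \<open>G_n(d) = {j in [n] : gcd(j,n) = d}, with [n] = {1..n} identified with Z_n.\<close>
definition Gn :: "nat \<Rightarrow> nat \<Rightarrow> nat set" where
  "Gn n d = {j \<in> {1..n}. gcd j n = d}"

definition divisors_of :: "nat \<Rightarrow> nat set" where
  "divisors_of n = {d. d dvd n \<and> d > 0}"

definition ICG_conn :: "nat \<Rightarrow> nat set \<Rightarrow> nat set" where
  "ICG_conn n D = (\<Union>d\<in>D. Gn n d)"

text \<open>Adjacency matrix of Cay(Z_n, S): vertex i+1 (matrix index i < n) is adjacent
  to vertex j+1 iff (j+1) - (i+1) is congruent mod n to some element of S.\<close>
definition cayley_adj :: "nat \<Rightarrow> nat set \<Rightarrow> complex mat" where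
  "cayley_adj n S = mat n n (\<lambda>(i, j).
     if \<exists>s\<in>S. [int j - int i = int s] (mod int n) then 1 else 0)"

definition ICG_adj :: "nat \<Rightarrow> nat set \<Rightarrow> complex mat" where
  "ICG_adj n D = cayley_adj n (ICG_conn n D)"

definition Spec :: "complex mat \<Rightarrow> complex multiset" where
  "Spec A = proots (char_poly A)"

end

theory Submission
  imports Defs "Jordan_Normal_Form.Schur_Decomposition"
begin

definition tr :: "complex mat \<Rightarrow> nat \<Rightarrow> complex" where
  "tr M n = (\<Sum>i<n. M $$ (i,i))"

lemma tr_comm:
  assumes X: "X \<in> carrier_mat n n" and Y: "Y \<in> carrier_mat n n"
  shows "tr (X * Y) n = tr (Y * X) n"
proof -
  have "tr (X * Y) n = (\<Sum>i<n. \<Sum>k<n. X $$ (i,k) * Y $$ (k,i))"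
    using X Y unfolding tr_def
    by (intro sum.cong refl) (auto simp: scalar_prod_def atLeast0LessThan)
  also have "\<dots> = (\<Sum>k<n. \<Sum>i<n. Y $$ (k,i) * X $$ (i,k))"
    by (subst sum.swap) (simp add: mult.commute)
  also have "\<dots> = tr (Y * X) n"
    using X Y unfolding tr_def
    by (intro sum.cong refl) (auto simp: scalar_prod_def atLeast0LessThan)
  finally show ?thesis .
qed

lemma proots_lin_prod: "proots (\<Prod>a\<leftarrow>as. [:- a, 1:]) = mset (as :: complex list)"
proof (induction as)
  case Nil then show ?case by simp
next
  case (Cons a as)
  have nz: "(\<Prod>a\<leftarrow>as. [:- a, 1:]) \<noteq> (0::complex poly)"
    by (auto simp: prod_list_zero_iff)
  have e: "(\<Prod>a\<leftarrow>a#as. [:- a, 1:]) = [:-a,1:] * (\<Prod>a\<leftarrow>as. [:- a, 1:])" by simp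
  have "proots (\<Prod>a\<leftarrow>a#as. [:- a, 1:]) = proots [:-a,1:] + proots (\<Prod>a\<leftarrow>as. [:- a, 1:])"
    unfolding e using nz by (intro proots_mult) auto
  then show ?case using Cons by simp
qed

lemma spec_sq:
  assumes A: "(A :: complex mat) \<in> carrier_mat n n"
  shows "(\<Sum>x\<in>#Spec A. x^2) = tr (A * A) n"
proof -
  obtain as where cp: "char_poly A = (\<Prod> a \<leftarrow> as. [:- a, 1:])"
    using char_poly_factorized[OF A] by blast
  define B where "B = schur_upper_triangular A as"
  have B: "B \<in> carrier_mat n n" "upper_triangular B" "similar_mat A B"
    using schur_upper_triangular[OF A cp] unfolding B_def by auto
  have "Spec A = proots (char_poly B)" unfolding Spec_def using char_poly_similar[OF B(3)] by simp
  also have "\<dots> = mset (diag_mat B)"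
    using char_poly_upper_triangular[OF B(1) B(2)] proots_lin_prod by simp
  finally have sp: "Spec A = mset (diag_mat B)" .
  have "(\<Sum>x\<in>#Spec A. x^2) = (\<Sum>i<n. (B$$(i,i))^2)"
    unfolding sp diag_mat_def using B(1)
    by (simp add: sum_unfold_sum_mset image_mset.compositionality o_def lessThan_atLeast0)
  also have "\<dots> = tr (B * B) n"
    unfolding tr_def
  proof (intro sum.cong refl)
    fix i assume i: "i \<in> {..<n}"
    have "(B*B) $$ (i,i) = (\<Sum>k\<in>{0..<n}. B $$ (i,k) * B $$ (k,i))"
      using B(1) i by (simp add: scalar_prod_def)
    also have "\<dots> = (\<Sum>k\<in>{i}. B $$ (i,k) * B $$ (k,i))"
    proof (rule sum.mono_neutral_right)
      show "\<forall>k\<in>{0..<n} - {i}. B $$ (i, k) * B $$ (k, i) = 0"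
      proof
        fix k assume k: "k \<in> {0..<n} - {i}"
        have ut: "\<And>a b. a < n \<Longrightarrow> b < a \<Longrightarrow> B $$ (a,b) = 0"
          using B(1,2) unfolding upper_triangular_def by auto
        show "B $$ (i, k) * B $$ (k, i) = 0"
        proof (cases "k < i")
          case True then show ?thesis using ut[of i k] i by simp
        next
          case False then have "i < k" using k by auto
          then show ?thesis using ut[of k i] k by simp
        qed
      qed
    qed (use i in auto)
    finally show "(B$$(i,i))^2 = (B*B) $$ (i,i)" by (simp add: power2_eq_square)
  qed
  also have "\<dots> = tr (A * A) n"
  proof -
    obtain m P Q where PQ: "{A,B,P,Q} \<subseteq> carrier_mat m m" "P * Q = 1\<^sub>m m" "Q * P = 1\<^sub>m m" "A = P * B * Q"
      using similar_matD[OF B(3)] by blast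
    have m: "m = n" using PQ(1) A by auto
    have P: "P \<in> carrier_mat n n" and Q: "Q \<in> carrier_mat n n" using PQ(1) m by auto
    have "A * A = P * (B * B) * Q"
    proof -
      have "A * A = P * B * (Q * P) * B * Q" unfolding PQ(4) using P Q B(1)
        by (simp add: assoc_mult_mat[of _ n n _ n _ n])
      also have "\<dots> = P * (B * B) * Q" unfolding PQ(3) m using P Q B(1)
        by (simp add: assoc_mult_mat[of _ n n _ n _ n])
      finally show ?thesis .
    qed
    then have "tr (A*A) n = tr (Q * (P * (B * B))) n"
      using tr_comm[of "P * (B*B)" n Q] P Q B(1) by simp
    also have "Q * (P * (B * B)) = (Q * P) * (B * B)"
      using P Q B(1) by (intro assoc_mult_mat[symmetric]) auto
    also have "\<dots> = B * B" unfolding PQ(3) m using B(1) by simp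
    finally show ?thesis by simp
  qed
  finally show ?thesis .
qed


lemma conn_sub:
  assumes "D \<subseteq> divisors_of n - {n}"
  shows "ICG_conn n D \<subseteq> {1..<n}"
proof
  fix s assume "s \<in> ICG_conn n D"
  then obtain d where d: "d \<in> D" "s \<in> {1..n}" "gcd s n = d" unfolding ICG_conn_def Gn_def by auto
  have "d \<noteq> n" using d(1) assms by auto
  then have "s \<noteq> n" using d by auto
  then show "s \<in> {1..<n}" using d by auto
qed

lemma conn_mem:
  assumes "D \<subseteq> divisors_of n - {n}" "x < n"
  shows "x \<in> ICG_conn n D \<longleftrightarrow> gcd x n \<in> D"
proof
  assume "x \<in> ICG_conn n D" then show "gcd x n \<in> D" unfolding ICG_conn_def Gn_def by auto
next
  assume g: "gcd x n \<in> D"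
  have "x \<noteq> 0" using g assms by auto
  then show "x \<in> ICG_conn n D" using g assms unfolding ICG_conn_def Gn_def by auto
qed

definition fmod :: "nat \<Rightarrow> nat \<Rightarrow> nat \<Rightarrow> nat" where
  "fmod n i k = nat ((int k - int i) mod int n)"

lemma entry_char:
  assumes "D \<subseteq> divisors_of n - {n}" "n \<ge> 1"
  shows "(\<exists>s\<in>ICG_conn n D. [int j - int i = int s] (mod int n)) \<longleftrightarrow> fmod n i j \<in> ICG_conn n D"
proof
  assume "\<exists>s\<in>ICG_conn n D. [int j - int i = int s] (mod int n)"
  then obtain s where s: "s \<in> ICG_conn n D" "[int j - int i = int s] (mod int n)" by blast
  have "s < n" using conn_sub[OF assms(1)] s(1) by auto
  then have "int s mod int n = int s" by simp
  then have "(int j - int i) mod int n = int s" using s(2) unfolding cong_def by simp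
  then have "fmod n i j = s" unfolding fmod_def by simp
  then show "fmod n i j \<in> ICG_conn n D" using s by simp
next
  assume h: "fmod n i j \<in> ICG_conn n D"
  have "int (fmod n i j) = (int j - int i) mod int n" unfolding fmod_def using assms(2) by simp
  then have "[int j - int i = int (fmod n i j)] (mod int n)" unfolding cong_def by simp
  then show "\<exists>s\<in>ICG_conn n D. [int j - int i = int s] (mod int n)" using h by blast
qed

lemma fmod_lt: "n \<ge> 1 \<Longrightarrow> fmod n i k < n"
  unfolding fmod_def by (simp add: nat_less_iff)

lemma fmod_gcd: "n \<ge> 1 \<Longrightarrow> gcd (fmod n i k) n = nat (gcd (int k - int i) (int n))"
proof -
  assume n: "n \<ge> 1"
  have "int (gcd (fmod n i k) n) = gcd ((int k - int i) mod int n) (int n)"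
    unfolding fmod_def using n by (simp add: gcd_int_def)
  also have "\<dots> = gcd (int k - int i) (int n)" using n by (simp add: gcd_mod_left)
  finally show ?thesis by simp
qed

lemma fmod_sym:
  assumes "D \<subseteq> divisors_of n - {n}" "n \<ge> 1"
  shows "fmod n i k \<in> ICG_conn n D \<longleftrightarrow> fmod n k i \<in> ICG_conn n D"
proof -
  have "gcd (int k - int i) (int n) = gcd (int i - int k) (int n)"
    by (metis gcd_neg1_int minus_diff_eq)
  then show ?thesis
    using conn_mem[OF assms(1) fmod_lt[OF assms(2)]] fmod_gcd[OF assms(2)] by metis
qed

lemma row_card:
  assumes "D \<subseteq> divisors_of n - {n}" "n \<ge> 1"
  shows "card {k\<in>{..<n}. fmod n i k \<in> ICG_conn n D} = card (ICG_conn n D)"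
proof -
  let ?f = "fmod n i"
  have inj: "inj_on ?f {..<n}"
  proof
    fix a b assume a: "a \<in> {..<n}" and b: "b \<in> {..<n}" and e: "?f a = ?f b"
    have ia: "int (?f a) = (int a - int i) mod int n" unfolding fmod_def using assms(2) by simp
    have ib: "int (?f b) = (int b - int i) mod int n" unfolding fmod_def using assms(2) by simp
    have "(int a - int i) mod int n = (int b - int i) mod int n"
      using e ia ib by simp
    then have "[int a - int i = int b - int i] (mod int n)" unfolding cong_def .
    then have "[int a = int b] (mod int n)" by (simp add: cong_diff_iff_cong_0 cong_iff_dvd_diff)
    then have "int a mod int n = int b mod int n" unfolding cong_def .
    then show "a = b" using a b by simp
  qed
  have im: "?f ` {..<n} = {..<n}"
    by (rule endo_inj_surj) (use inj fmod_lt[OF assms(2)] in auto)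
  have "?f ` {k\<in>{..<n}. ?f k \<in> ICG_conn n D} = ?f ` {..<n} \<inter> ICG_conn n D" by auto
  also have "\<dots> = ICG_conn n D" unfolding im using conn_sub[OF assms(1)] by auto
  finally have "card (ICG_conn n D) = card {k\<in>{..<n}. ?f k \<in> ICG_conn n D}"
    using card_image[OF inj_on_subset[OF inj, of "{k\<in>{..<n}. ?f k \<in> ICG_conn n D}"]] by auto
  then show ?thesis by simp
qed

lemma adj_carrier: "ICG_adj n D \<in> carrier_mat n n"
  unfolding ICG_adj_def cayley_adj_def by simp

lemma adj_entry:
  assumes "D \<subseteq> divisors_of n - {n}" "n \<ge> 1" "i < n" "j < n"
  shows "ICG_adj n D $$ (i,j) = (if fmod n i j \<in> ICG_conn n D then 1 else 0)"
  using assms entry_char[OF assms(1,2)] unfolding ICG_adj_def cayley_adj_def by simp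

lemma tr_adj:
  assumes "D \<subseteq> divisors_of n - {n}" "n \<ge> 1"
  shows "tr (ICG_adj n D * ICG_adj n D) n = of_nat (n * card (ICG_conn n D))"
proof -
  let ?A = "ICG_adj n D" and ?S = "ICG_conn n D"
  have "tr (?A * ?A) n = (\<Sum>i<n. \<Sum>k<n. ?A $$ (i,k) * ?A $$ (k,i))"
    using adj_carrier[of n D] unfolding tr_def
    by (intro sum.cong refl) (auto simp: scalar_prod_def atLeast0LessThan)
  also have "\<dots> = (\<Sum>i<n. \<Sum>k<n. (if fmod n i k \<in> ?S then 1 else 0))"
    by (intro sum.cong refl) (auto simp: adj_entry[OF assms] fmod_sym[OF assms])
  also have "\<dots> = (\<Sum>i<n. of_nat (card ?S))"
  proof (intro sum.cong refl)
    fix i assume "i \<in> {..<n}"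
    have "(\<Sum>k<n. (if fmod n i k \<in> ?S then 1 else 0)) = (\<Sum>k\<in>{k\<in>{..<n}. fmod n i k \<in> ?S}. (1::complex))"
      by (subst sum.inter_filter[symmetric]) auto
    also have "\<dots> = of_nat (card ?S)" using row_card[OF assms, of i] by simp
    finally show "(\<Sum>k<n. (if fmod n i k \<in> ?S then 1 else 0)) = (of_nat (card ?S) :: complex)" .
  qed
  also have "\<dots> = of_nat (n * card ?S)" by simp
  finally show ?thesis .
qed

lemma card_eq:
  assumes "D1 \<subseteq> divisors_of n - {n}" "D2 \<subseteq> divisors_of n - {n}" "n \<ge> 1"
    and "Spec (ICG_adj n D1) = Spec (ICG_adj n D2)"
  shows "card (ICG_conn n D1) = card (ICG_conn n D2)"
proof -
  have "(of_nat (n * card (ICG_conn n D1)) :: complex) = of_nat (n * card (ICG_conn n D2))"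
  proof -
    have "(of_nat (n * card (ICG_conn n D1)) :: complex) = tr (ICG_adj n D1 * ICG_adj n D1) n"
      using tr_adj[OF assms(1,3)] by simp
    also have "\<dots> = (\<Sum>x\<in>#Spec (ICG_adj n D1). x^2)" using spec_sq[OF adj_carrier, of n D1] by simp
    also have "\<dots> = (\<Sum>x\<in>#Spec (ICG_adj n D2). x^2)" using assms(4) by simp
    also have "\<dots> = tr (ICG_adj n D2 * ICG_adj n D2) n" using spec_sq[OF adj_carrier, of n D2] by simp
    also have "\<dots> = of_nat (n * card (ICG_conn n D2))" using tr_adj[OF assms(2,3)] by simp
    finally show ?thesis .
  qed
  then have "n * card (ICG_conn n D1) = n * card (ICG_conn n D2)" by (simp only: of_nat_eq_iff)
  then show ?thesis using assms(3) by simp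
qed

lemma one_side:
  assumes "D1 \<subseteq> divisors_of n - {n}" "D2 \<subseteq> divisors_of n - {n}" "n \<ge> 1"
    and "real (totient n) \<ge> real n / 2"
    and "1 \<in> D1" "1 \<notin> D2"
  shows "card (ICG_conn n D1) \<noteq> card (ICG_conn n D2)"
proof -
  have n2: "n \<ge> 2" using assms(1,3,5) by (cases "n = 1") auto
  have t1: "totatives n \<subseteq> ICG_conn n D1"
    using assms(5) unfolding totatives_def ICG_conn_def Gn_def coprime_iff_gcd_eq_1 by auto
  have fin: "finite (ICG_conn n D1)" using conn_sub[OF assms(1)] finite_subset by blast
  have c1: "totient n \<le> card (ICG_conn n D1)"
    unfolding totient_def using card_mono[OF fin t1] .
  have tsub: "totatives n \<subseteq> {1..<n}"
    using n2 unfolding totatives_def by (auto simp: order.order_iff_strict)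
  have s2: "ICG_conn n D2 \<subseteq> {1..<n} - totatives n"
  proof
    fix x assume x: "x \<in> ICG_conn n D2"
    then have "x \<in> {1..<n}" using conn_sub[OF assms(2)] by auto
    moreover have "x \<notin> totatives n"
    proof
      assume "x \<in> totatives n"
      then have "gcd x n = 1" unfolding totatives_def by auto
      then show False using x assms(6) conn_mem[OF assms(2), of x] \<open>x \<in> {1..<n}\<close> by auto
    qed
    ultimately show "x \<in> {1..<n} - totatives n" by blast
  qed
  have "card (ICG_conn n D2) \<le> card ({1..<n} - totatives n)" by (rule card_mono[OF _ s2]) auto
  also have "\<dots> = (n - 1) - totient n"
    unfolding totient_def using tsub by (simp add: card_Diff_subset finite_subset)
  finally have c2: "card (ICG_conn n D2) \<le> (n - 1) - totient n" .
  have "2 * totient n \<ge> n" using assms(4) by linarith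
  then show ?thesis using c1 c2 n2 by linarith
qed

theorem lemma3p13:
  fixes n :: nat and D1 D2 :: "nat set"
  assumes "n \<ge> 1"
    and "real (totient n) \<ge> real n / 2"
    and "D1 \<subseteq> divisors_of n - {n}"
    and "D2 \<subseteq> divisors_of n - {n}"
    and "Spec (ICG_adj n D1) = Spec (ICG_adj n D2)"
  shows "1 \<notin> (D1 - D2) \<union> (D2 - D1)"
proof
  assume h: "1 \<in> (D1 - D2) \<union> (D2 - D1)"
  have ce: "card (ICG_conn n D1) = card (ICG_conn n D2)"
    using card_eq[OF assms(3,4,1,5)] .
  show False
  proof (cases "1 \<in> D1")
    case True
    then show False using h one_side[OF assms(3,4,1,2)] ce by auto
  next
    case False
    then show False using h one_side[OF assms(4,3,1,2)] ce by auto
  qed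
qed

end
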